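(* Let $X\in\mathscr K$, fix $t$ and let $U(t,\cdot)\in L^2(\Omega)$, $\mathcal U(t,m)=\int_0^mU(t,\omega)\,d\omega$, and let $M$ be the right-continuous generalized inverse of $X$. Assume $U(t,\cdot)-\operatorname{Proj}_{\mathscr H_X}U(t,\cdot)\in N_X\mathscr K$. Then for every $k\in\mathbb{R}$, $$q'_{k,M}(t,X(m))\le\eta'_{k,M}(X(m))\,\mathcal U'_M(t,X(m))\quad\text{for a.e. }m\in\Omega.$$
   Context: $\Omega=(0,1)$; $\mathscr K=\{X\in L^2(\Omega):X\text{ nondecreasing}\}$ (right-continuous representatives); $M(x)=|\{m\in\Omega:X(m)\le x\}|$ is the right-continuous generalized inverse of $X$, the distribution function of $\mu=X_\#(\text{Lebesgue on }\Omega)$. $N_X\mathscr K=\{W\in L^2(\Omega):\int_\Omega W(Y-X)\,dm\le0\ \forall Y\in\mathscr K\}$. $\Omega_X=\{m:X\text{ constant near }m\}$; $\mathscr H_X$ is the subspace of $L^2(\Omega)$ functions constant on each interval contained in $\Omega_X$, and $\operatorname{Proj}_{\mathscr H_X}$ the orthogonal projection (identity off $\Omega_X$, averaging over each maximal interval of $\Omega_X$). With the Kružkov pair $\eta_k(m)=|m-k|$, $q_k(t,m)=\operatorname{sgn}(m-k)(\mathcal U(t,m)-\mathcal U(t,k))$, the functions $\eta'_{k,M}$, $q'_{k,M}(t,\cdot)$, $\mathcal U'_M(t,\cdot)$ denote the Radon–Nikodym derivatives of $\partial_x\eta_k(M)$, $\partial_xq_k(t,M)$, $\partial_x\mathcal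 U(t,M)$ with respect to $\mu=\partial_xM$; explicitly, for $G\in\{\eta_k,q_k(t,\cdot),\mathcal U(t,\cdot)\}$, $G'_M(x)=\frac{d}{dm}G(M(x))$ (classical/a.e. derivative in $m$) if $\mu(\{x\})=0$ and $G'_M(x)=\frac{G(M(x))-G(M(x-))}{M(x)-M(x-)}$ if $\mu(\{x\})>0$. *)

theory Defs
  imports "HOL-Analysis.Analysis"
begin

definition Omega :: "real set" where
  "Omega = {0<..<1}"

definition L2 :: "(real \<Rightarrow> real) \<Rightarrow> bool" where
  "L2 f \<longleftrightarrow> f \<in> borel_measurable (lebesgue_on Omega)
           \<and> integrable (lebesgue_on Omega) (\<lambda>m. (f m)\<^sup>2)"

definition inK :: "(real \<Rightarrow> real) \<Rightarrow> bool" where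
  "inK Y \<longleftrightarrow> L2 Y \<and> mono_on Omega Y"

definition normal_cone :: "(real \<Rightarrow> real) \<Rightarrow> (real \<Rightarrow> real) set" where
  "normal_cone X = {W. L2 W \<and>
     (\<forall>Y. inK Y \<longrightarrow> (\<integral>m. W m * (Y m - X m) \<partial>(lebesgue_on Omega)) \<le> 0)}"

definition Omega_X :: "(real \<Rightarrow> real) \<Rightarrow> real set" where
  "Omega_X X = {m \<in> Omega. \<exists>e>0. ball m e \<subseteq> Omega \<and> (\<forall>m'\<in>ball m e. X m' = X m)}"

text \<open>orthogonal projection onto H_X: identity off Omega_X, averaging over
  each maximal interval (connected component) of Omega_X\<close>
definition Proj_H :: "(real \<Rightarrow> real) \<Rightarrow> (real \<Rightarrow> real) \<Rightarrow> real \<Rightarrow> real" where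
  "Proj_H X f m =
     (if m \<in> Omega_X X then
        (let I = connected_component_set (Omega_X X) m in
           (\<integral>w. f w \<partial>(lebesgue_on I)) / measure lebesgue I)
      else f m)"

text \<open>right-continuous generalized inverse / distribution function M\<close>
definition distM :: "(real \<Rightarrow> real) \<Rightarrow> real \<Rightarrow> real" where
  "distM X x = measure lebesgue {m \<in> Omega. X m \<le> x}"

definition mu :: "(real \<Rightarrow> real) \<Rightarrow> real measure" where
  "mu X = distr (lebesgue_on Omega) borel X"

text \<open>Radon-Nikodym derivative of d/dx G(M) with respect to mu\<close>
definition RN_deriv_M :: "(real \<Rightarrow> real) \<Rightarrow> (real \<Rightarrow> real) \<Rightarrow> real \<Rightarrow> real" where
  "RN_deriv_M X G x =
     (if measure (mu X) {x} > 0 then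
        (G (distM X x) - G (Lim (at_left x) (distM X)))
          / (distM X x - Lim (at_left x) (distM X))
      else deriv G (distM X x))"

definition primU :: "(real \<Rightarrow> real \<Rightarrow> real) \<Rightarrow> real \<Rightarrow> real \<Rightarrow> real" where
  "primU U t m = (\<integral>w\<in>{0..m} \<inter> Omega. U t w \<partial>lebesgue)"

definition eta :: "real \<Rightarrow> real \<Rightarrow> real" where
  "eta k m = \<bar>m - k\<bar>"

definition qflux :: "(real \<Rightarrow> real \<Rightarrow> real) \<Rightarrow> real \<Rightarrow> real \<Rightarrow> real \<Rightarrow> real" where
  "qflux U k t m = sgn (m - k) * (primU U t m - primU U t k)"

end

theory Submission
  imports Defs
begin


definition Gf :: "(real \<Rightarrow> real) \<Rightarrow> real \<Rightarrow> real" where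
  "Gf f y = (LINT w:{..y}|lebesgue. f w)"

lemma si_sub:
  fixes f :: "real \<Rightarrow> real"
  assumes "integrable lebesgue f" "A \<in> sets lebesgue"
  shows "set_integrable lebesgue A f"
  using integrable_mult_indicator[OF assms(2,1)] by (simp add: set_integrable_def)

lemma si_const:
  assumes "A \<in> lmeasurable"
  shows "set_integrable lebesgue A (\<lambda>x. c::real)"
proof -
  have "integrable lebesgue (\<lambda>x. c * indicat_real A x)"
    using assms by (intro integrable_mult_right integrable_real_indicator) (auto simp: fmeasurable_def)
  then show ?thesis unfolding set_integrable_def by (simp add: mult.commute)
qed

lemma Gf_diff:
  fixes f :: "real \<Rightarrow> real"
  assumes f: "integrable lebesgue f" and ab: "a \<le> b"
  shows "Gf f b - Gf f a = (LINT w:{a<..b}|lebesgue. f w)"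
proof -
  have "{..b} = {..a} \<union> {a<..b}" using ab by auto
  moreover have "(LINT w:{..a} \<union> {a<..b}|lebesgue. f w) = (LINT w:{..a}|lebesgue. f w) + (LINT w:{a<..b}|lebesgue. f w)"
    by (rule set_integral_Un) (auto simp: si_sub[OF f])
  ultimately have "Gf f b = (LINT w:{..a}|lebesgue. f w) + (LINT w:{a<..b}|lebesgue. f w)"
    unfolding Gf_def by simp
  then show ?thesis by (simp add: Gf_def)
qed

lemma Gf_diff':
  fixes f :: "real \<Rightarrow> real"
  assumes f: "integrable lebesgue f" and ab: "a \<le> b"
  shows "Gf f b - Gf f a = (LINT w:{a..b}|lebesgue. f w)"
proof -
  have "{a..b} = {a} \<union> {a<..b}" using ab by auto
  moreover have "(LINT w:{a}|lebesgue. f w) = 0"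
    by (subst set_integral_at_point) (auto simp: si_sub[OF f])
  moreover have "(LINT w:{a} \<union> {a<..b}|lebesgue. f w) = (LINT w:{a}|lebesgue. f w) + (LINT w:{a<..b}|lebesgue. f w)"
    by (rule set_integral_Un) (auto simp: si_sub[OF f])
  ultimately have "(LINT w:{a..b}|lebesgue. f w) = (LINT w:{a<..b}|lebesgue. f w)"
    by simp
  then show ?thesis using Gf_diff[OF assms] by simp
qed

lemma Gf_left:
  fixes f :: "real \<Rightarrow> real"
  assumes f: "integrable lebesgue f"
  shows "(\<lambda>j. Gf f (x - 1 / real (Suc j))) \<longlonglongrightarrow> Gf f x"
proof -
  let ?A = "\<lambda>j. {..x - 1 / real (Suc j)}"
  have "incseq ?A"
    by (auto simp: incseq_def frac_le intro!: order.trans[of _ "x - 1 / real (Suc _)"])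
  moreover have U: "(\<Union>j. ?A j) = {..<x}"
  proof (auto)
    fix y assume "y < x"
    then obtain j where "1 / real (Suc j) < x - y"
      by (metis diff_gt_0_iff_gt nat_approx_posE)
    then show "\<exists>j. y \<le> x - 1 / (1 + real j)" by (auto intro!: exI[of _ j])
  next
    fix y j assume "y \<le> x - 1 / (1 + real j)"
    moreover have "0 < 1 / (1 + real j)" by simp
    ultimately show "y < x" by linarith
  qed
  ultimately have "(\<lambda>j. LINT w:?A j|lebesgue. f w) \<longlonglongrightarrow> (LINT w:{..<x}|lebesgue. f w)"
    using set_integral_cont_up[of ?A lebesgue f] by (simp add: si_sub[OF f])
  moreover have "(LINT w:{..<x}|lebesgue. f w) = Gf f x"
  proof -
    have "{..x} = {..<x} \<union> {x}" by auto
    moreover have "(LINT w:{x}|lebesgue. f w) = 0"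
      by (subst set_integral_at_point) (auto simp: si_sub[OF f])
    moreover have "(LINT w:{..<x} \<union> {x}|lebesgue. f w) = (LINT w:{..<x}|lebesgue. f w) + (LINT w:{x}|lebesgue. f w)"
      by (rule set_integral_Un) (auto simp: si_sub[OF f])
    ultimately show ?thesis unfolding Gf_def by simp
  qed
  ultimately show ?thesis by (simp add: Gf_def)
qed

lemma Gf_right:
  fixes f :: "real \<Rightarrow> real"
  assumes f: "integrable lebesgue f"
  shows "(\<lambda>j. Gf f (x + 1 / real (Suc j))) \<longlonglongrightarrow> Gf f x"
proof -
  let ?A = "\<lambda>j. {..x + 1 / real (Suc j)}"
  have "decseq ?A"
    by (auto simp: decseq_def frac_le intro!: order.trans[of _ "x + 1 / real (Suc _)"])
  moreover have U: "(\<Inter>j. ?A j) = {..x}"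
  proof (auto)
    fix y assume "\<forall>j. y \<le> x + 1 / (1 + real j)"
    show "y \<le> x"
    proof (rule ccontr)
      assume "\<not> y \<le> x"
      then obtain j where "1 / real (Suc j) < y - x"
        by (metis diff_gt_0_iff_gt nat_approx_posE not_le)
      with \<open>\<forall>j. _\<close> show False by (auto dest: spec[of _ j])
    qed
  next
    fix y j assume "y \<le> x"
    moreover have "0 < 1 / (1 + real j)" by simp
    ultimately show "y \<le> x + 1 / (1 + real j)" by linarith
  qed
  ultimately have "(\<lambda>j. LINT w:?A j|lebesgue. f w) \<longlonglongrightarrow> (LINT w:{..x}|lebesgue. f w)"
    using set_integral_cont_down[of ?A lebesgue f] by (simp add: si_sub[OF f])
  then show ?thesis by (simp add: Gf_def)
qed

definition Sset :: "(real \<Rightarrow> real) \<Rightarrow> real \<Rightarrow> real \<Rightarrow> real set" where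
  "Sset f r s = {x. f x < r \<and> (\<forall>n::nat. \<exists>a b. a < x \<and> x < b \<and> b - a < 1 / real (Suc n)
      \<and> s * (b - a) < Gf f b - Gf f a)}"

lemma Sset_meas:
  fixes f :: "real \<Rightarrow> real"
  assumes fm: "f \<in> borel_measurable lebesgue"
  shows "Sset f r s \<in> sets lebesgue"
proof -
  define Op where "Op n = \<Union>{{a<..<b} | a b. b - a < 1 / real (Suc n) \<and> s * (b - a) < Gf f b - Gf f a}" for n
  have 1: "x \<in> Op n" if "\<exists>a b. a < x \<and> x < b \<and> b - a < 1 / real (Suc n) \<and> s * (b - a) < Gf f b - Gf f a" for x n
  proof -
    from that obtain a b where ab: "a < x" "x < b" "b - a < 1 / real (Suc n)" "s * (b - a) < Gf f b - Gf f a" by blast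
    show ?thesis unfolding Op_def by (rule UnionI[of "{a<..<b}"]) (use ab in auto)
  qed
  have 2: "\<exists>a b. a < x \<and> x < b \<and> b - a < 1 / real (Suc n) \<and> s * (b - a) < Gf f b - Gf f a" if "x \<in> Op n" for x n
    using that unfolding Op_def by fastforce
  have "Sset f r s = {x \<in> space lebesgue. f x < r} \<inter> (\<Inter>n. Op n)"
    unfolding Sset_def using 1 2 by auto
  moreover have "{x \<in> space lebesgue. f x < r} \<in> sets lebesgue"
    using fm by measurable
  moreover have "open (Op n)" for n unfolding Op_def by auto
  then have "Op n \<in> sets lebesgue" for n
    by (simp add: borel_open sets_completionI_sets)
  ultimately show ?thesis by auto
qed

lemma key_ineq:
  fixes f :: "real \<Rightarrow> real"
  assumes f: "integrable lebesgue f" and rs: "r < s"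
    and S'def: "S' = Sset f r s \<inter> ball 0 R"
    and Op: "open Op" "S' \<subseteq> Op" "Op \<subseteq> ball 0 (R + 1)"
  shows "(s - r) * measure lebesgue S' \<le> (LINT x:(Op - S')|lebesgue. \<bar>f x\<bar> + \<bar>s\<bar>)"
proof -
  have fm: "f \<in> borel_measurable lebesgue" using f by auto
  have S'm: "S' \<in> sets lebesgue" unfolding S'def using Sset_meas[OF fm] by auto
  have Om: "Op \<in> sets lebesgue" using Op(1) by (simp add: borel_open sets_completionI_sets)
  define B where "B = ball (0::real) (R + 1)"
  have Bm: "B \<in> lmeasurable" unfolding B_def by simp
  have intB: "set_integrable lebesgue B (\<lambda>x. c)" for c :: real
  proof -
    have "integrable lebesgue (\<lambda>x. c * indicat_real B x)"
      using Bm by (intro integrable_mult_right integrable_real_indicator) (auto simp: fmeasurable_def)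
    then show ?thesis unfolding set_integrable_def by (simp add: mult.commute)
  qed
  have intsub: "set_integrable lebesgue A g" if "A \<subseteq> B" "A \<in> sets lebesgue"
     "set_integrable lebesgue B g" for A and g :: "real \<Rightarrow> real"
    using set_integrable_subset[OF that(3) that(2)] that(1) by blast
  define K where "K = {(a, b). a < b \<and> {a..b} \<subseteq> Op \<and> s * (b - a) < Gf f b - Gf f a}"
  define c where "c i = (fst i + snd i) / 2" for i :: "real \<times> real"
  define \<rho> where "\<rho> i = (snd i - fst i) / 2" for i :: "real \<times> real"
  have cb: "cball (c i) (\<rho> i) = {fst i..snd i}" for i
    unfolding c_def \<rho>_def cball_eq_atLeastAtMost by (auto simp: field_simps)
  obtain C where C: "countable C" "C \<subseteq> K"
     and pw: "pairwise (\<lambda>i j. disjnt (cball (c i) (\<rho> i)) (cball (c j) (\<rho> j))) C"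
     and neg: "negligible (S' - (\<Union>i \<in> C. cball (c i) (\<rho> i)))"
  proof (rule Vitali_covering_theorem_cballs[of K \<rho> S' c])
    show "0 < \<rho> i" if "i \<in> K" for i using that unfolding K_def \<rho>_def by auto
    show "\<exists>i. i \<in> K \<and> x \<in> cball (c i) (\<rho> i) \<and> \<rho> i < d" if "x \<in> S'" "0 < d" for x d
    proof -
      obtain e where e: "e > 0" "ball x e \<subseteq> Op"
        using Op \<open>x \<in> S'\<close> openE by blast
      obtain n where n: "1 / real (Suc n) < min e d"
        using e \<open>0 < d\<close> by (metis min_less_iff_conj nat_approx_posE)
      from \<open>x \<in> S'\<close> obtain a b where ab: "a < x" "x < b" "b - a < 1 / real (Suc n)"
        "s * (b - a) < Gf f b - Gf f a"
        unfolding S'def Sset_def by blast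
      have "{a..b} \<subseteq> ball x e"
        using ab n by (auto simp: dist_real_def)
      then have "(a, b) \<in> K" using ab e unfolding K_def by auto
      moreover have "x \<in> cball (c (a,b)) (\<rho> (a,b))" using cb ab by auto
      moreover have "\<rho> (a, b) < d" using ab n unfolding \<rho>_def by auto
      ultimately show ?thesis by blast
    qed
  qed
  define V where "V = (\<Union>i\<in>C. {fst i..snd i})"
  have Vm: "V \<in> sets lebesgue"
    unfolding V_def using C(1) by (intro sets.countable_UN'') auto
  have VO: "V \<subseteq> Op" using C(2) unfolding V_def K_def by fastforce
  have OB: "Op \<subseteq> B" using Op unfolding B_def by auto
  define g where "g x = f x - s" for x
  have intg: "set_integrable lebesgue B g"
    unfolding g_def by (intro set_integral_diff(1) si_sub[OF f] intB) (use Bm in auto)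
  have a: "0 \<le> (LINT x:V|lebesgue. g x)"
  proof (cases "C = {}")
    case True then show ?thesis by (simp add: V_def set_lebesgue_integral_def)
  next
    case False
    define e where "e = from_nat_into C"
    have eC: "e n \<in> C" for n unfolding e_def using False by (simp add: from_nat_into)
    define A where "A n = (if e n \<in> e ` {..<n} then {} else {fst (e n)..snd (e n)})" for n
    have Am: "A n \<in> sets lebesgue" for n unfolding A_def by auto
    have AB: "A n \<subseteq> B" for n
    proof -
      obtain a b where eab: "e n = (a,b)" by fastforce
      then have "{a..b} \<subseteq> Op" using eC[of n] C(2) unfolding K_def by auto
      then show ?thesis unfolding A_def using eab OB by auto
    qed
    have disj: "A i \<inter> A j = {}" if "i < j" for i j
    proof (cases "A i = {} \<or> A j = {}")
      case True then show ?thesis by auto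
    next
      case False
      then have "e j \<notin> e ` {..<j}" unfolding A_def by (auto split: if_splits)
      then have "e i \<noteq> e j" using that by (metis image_eqI lessThan_iff)
      then have "disjnt (cball (c (e i)) (\<rho> (e i))) (cball (c (e j)) (\<rho> (e j)))"
        using pw eC unfolding pairwise_def by blast
      then show ?thesis unfolding A_def cb disjnt_def by auto
    qed
    have UA: "(\<Union>n. A n) = V"
    proof
      show "(\<Union>n. A n) \<subseteq> V" unfolding A_def V_def using eC by auto
      show "V \<subseteq> (\<Union>n. A n)"
      proof
        fix x assume "x \<in> V"
        then obtain i where i: "i \<in> C" "x \<in> {fst i..snd i}" unfolding V_def by auto
        define n where "n = (LEAST n. e n = i)"
        have en: "e n = i" unfolding n_def e_def
          using from_nat_into_surj[OF C(1) i(1)] by (metis (mono_tags) LeastI)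
        have "e n \<notin> e ` {..<n}"
        proof
          assume "e n \<in> e ` {..<n}"
          then obtain m where "m < n" "e m = i" using en by auto
          then show False unfolding n_def using not_less_Least by blast
        qed
        then have "A n = {fst i..snd i}" unfolding A_def en by simp
        then show "x \<in> (\<Union>n. A n)" using i by auto
      qed
    qed
    define BB where "BB n = (\<Union>i<n. A i)" for n
    have incBB: "incseq BB" unfolding BB_def incseq_def by (auto intro: less_le_trans)
    have UBB: "(\<Union>n. BB n) = V" unfolding BB_def UA[symmetric] by auto
    have BBm: "BB n \<in> sets lebesgue" for n unfolding BB_def by (intro sets.finite_UN) (auto simp: Am)
    have intV0: "set_integrable lebesgue V g"
      by (rule intsub[OF _ Vm intg]) (use VO OB in blast)
    then have "set_integrable lebesgue (\<Union>n. BB n) g" unfolding UBB .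
    from set_integral_cont_up[OF BBm incBB this]
    have lim: "(\<lambda>n. LINT x:BB n|lebesgue. g x) \<longlonglongrightarrow> (LINT x:V|lebesgue. g x)"
      unfolding UBB .
    have Apos: "0 \<le> (LINT x:A n|lebesgue. g x)" for n
    proof (cases "e n \<in> e ` {..<n}")
      case True then show ?thesis unfolding A_def by (simp add: set_lebesgue_integral_def)
    next
      case False
      obtain a b where eab: "e n = (a, b)" by fastforce
      then have ab: "a < b" "s * (b - a) < Gf f b - Gf f a"
        using eC[of n] C(2) unfolding K_def by auto
      have An: "A n = {a..b}" unfolding A_def using False eab by simp
      have "(LINT x:{a..b}|lebesgue. g x) = (LINT x:{a..b}|lebesgue. f x) - (LINT x:{a..b}|lebesgue. s)"
        unfolding g_def by (rule set_integral_diff(2)) (auto simp: si_sub[OF f] si_const)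
      also have "\<dots> = Gf f b - Gf f a - s * (b - a)"
        using ab by (simp add: Gf_diff'[OF f] set_integral_const)
      finally show ?thesis using ab An by simp
    qed
    have "(LINT x:BB n|lebesgue. g x) = (\<Sum>i<n. LINT x:A i|lebesgue. g x)" for n
      unfolding BB_def
    proof (rule set_integral_finite_Union)
      show "disjoint_family_on A {..<n}"
        unfolding disjoint_family_on_def using disj by (metis Int_commute linorder_neqE)
      show "set_integrable lebesgue (A i) g" for i using intsub[OF AB Am intg] .
    qed (auto simp: Am)
    then have "0 \<le> (LINT x:BB n|lebesgue. g x)" for n by (simp add: Apos sum_nonneg)
    then show ?thesis using LIMSEQ_le_const[OF lim] by blast
  qed
  define h where "h x = \<bar>f x\<bar> + \<bar>s\<bar>" for x
  have inth: "set_integrable lebesgue B h"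
    unfolding h_def by (intro set_integral_add(1) set_integrable_abs si_sub[OF f] intB) (use Bm in auto)
  have S'B: "S' \<subseteq> B" using Op OB by auto
  have S'lm: "S' \<in> lmeasurable" using fmeasurableI2[OF Bm S'B S'm] .
  have UV: "(\<Union>i \<in> C. cball (c i) (\<rho> i)) = V" unfolding V_def cb by simp
  have Nnull: "S' - V \<in> null_sets lebesgue" using neg UV negligible_iff_null_sets by auto
  have intV: "set_integrable lebesgue V g"
    by (rule intsub[OF _ Vm intg]) (use VO OB in blast)
  have intOS: "set_integrable lebesgue (Op - S') h"
    by (rule intsub[OF _ _ inth]) (use OB Om S'm in auto)
  have AEle: "AE x in lebesgue. indicator V x * g x \<le> (r - s) * indicator S' x + indicator (Op - S') x * h x"
  proof (rule AE_I'[OF Nnull], rule subsetI)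
    fix x assume "x \<in> {x \<in> space lebesgue. \<not> indicator V x * g x \<le> (r - s) * indicat_real S' x + indicat_real (Op - S') x * h x}"
    then have nle: "\<not> indicator V x * g x \<le> (r - s) * indicat_real S' x + indicat_real (Op - S') x * h x" by auto
    have xS: "x \<in> S'"
    proof (rule ccontr)
      assume "x \<notin> S'"
      moreover have "g x \<le> h x" unfolding g_def h_def by auto
      moreover have "0 \<le> h x" unfolding h_def by auto
      ultimately show False using nle VO by (cases "x \<in> V"; cases "x \<in> Op") (auto simp: indicator_def)
    qed
    from xS have "f x < r" unfolding S'def Sset_def by auto
    then have "x \<notin> V" using nle xS unfolding g_def by (auto simp: indicator_def)
    with xS show "x \<in> S' - V" by auto
  qed
  have i1: "integrable lebesgue (\<lambda>x. (r - s) * indicat_real S' x)"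
    using S'lm by (intro integrable_mult_right integrable_real_indicator) (auto simp: fmeasurable_def)
  have i2: "integrable lebesgue (\<lambda>x. indicat_real (Op - S') x * h x)"
    using intOS by (simp add: set_integrable_def)
  have "(LINT x:V|lebesgue. g x) = (\<integral>x. indicator V x * g x \<partial>lebesgue)"
    by (simp add: set_lebesgue_integral_def)
  also have "\<dots> \<le> (\<integral>x. (r - s) * indicator S' x + indicator (Op - S') x * h x \<partial>lebesgue)"
  proof (rule integral_mono_AE[OF _ _ AEle])
    show "integrable lebesgue (\<lambda>x. indicat_real V x * g x)"
      using intV by (simp add: set_integrable_def)
    show "integrable lebesgue (\<lambda>x. (r - s) * indicat_real S' x + indicat_real (Op - S') x * h x)"
      using Bochner_Integration.integrable_add[OF i1 i2] .
  qed
  also have "\<dots> = (r - s) * measure lebesgue S' + (LINT x:(Op - S')|lebesgue. h x)"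
    using Bochner_Integration.integral_add[OF i1 i2] by (simp add: set_lebesgue_integral_def)
  finally show ?thesis using a unfolding h_def by (simp add: algebra_simps)
qed

lemma Sset_ball_negligible:
  fixes f :: "real \<Rightarrow> real"
  assumes f: "integrable lebesgue f" and rs: "r < s"
  shows "negligible (Sset f r s \<inter> ball 0 R)"
proof -
  define S' where "S' = Sset f r s \<inter> ball 0 R"
  have fm: "f \<in> borel_measurable lebesgue" using f by auto
  have S'm: "S' \<in> sets lebesgue" unfolding S'_def using Sset_meas[OF fm] by auto
  define B where "B = ball (0::real) (R + 1)"
  have Bm: "B \<in> lmeasurable" unfolding B_def by simp
  have S'B: "S' \<subseteq> B" unfolding S'_def B_def by auto
  have S'lm: "S' \<in> lmeasurable" using fmeasurableI2[OF Bm S'B S'm] .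
  have "\<forall>n::nat. \<exists>T. open T \<and> S' \<subseteq> T \<and> (T - S') \<in> lmeasurable \<and> emeasure lebesgue (T - S') < ennreal (1 / real (Suc n))"
  proof
    fix n :: nat
    obtain T where "open T" "S' \<subseteq> T" "(T - S') \<in> lmeasurable" "emeasure lebesgue (T - S') < ennreal (1 / real (Suc n))"
      using sets_lebesgue_outer_open[OF S'm, of "1 / real (Suc n)"] by auto
    then show "\<exists>T. open T \<and> S' \<subseteq> T \<and> (T - S') \<in> lmeasurable \<and> emeasure lebesgue (T - S') < ennreal (1 / real (Suc n))"
      by blast
  qed
  then obtain T where T: "\<And>n. open (T n)" "\<And>n. S' \<subseteq> T n" "\<And>n. (T n - S') \<in> lmeasurable"
    "\<And>n. emeasure lebesgue (T n - S') < ennreal (1 / real (Suc n))"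
    by metis
  define Op where "Op n = B \<inter> (\<Inter>i\<in>{..n}. T i)" for n
  have Opo: "open (Op n)" for n unfolding Op_def B_def using T(1) by (intro open_Int open_INT) auto
  have S'Op: "S' \<subseteq> Op n" for n unfolding Op_def using S'B T(2) by auto
  have OpB: "Op n \<subseteq> ball 0 (R + 1)" for n unfolding Op_def B_def by auto
  define h where "h x = \<bar>f x\<bar> + \<bar>s\<bar>" for x
  define A where "A n = Op n - S'" for n
  have Am: "A n \<in> sets lebesgue" for n
    unfolding A_def using Opo[of n] S'm by (simp add: borel_open sets_completionI_sets sets.Diff)
  have decA: "decseq A" unfolding decseq_def A_def Op_def by auto
  have inth: "set_integrable lebesgue B h"
    unfolding h_def by (intro set_integral_add(1) set_integrable_abs si_sub[OF f] si_const Bm) (use Bm in auto)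
  have intA0: "set_integrable lebesgue (A 0) h"
    by (rule set_integrable_subset[OF inth Am]) (auto simp: A_def Op_def)
  from set_integral_cont_down[OF Am decA intA0]
  have lim: "(\<lambda>n. LINT x:A n|lebesgue. h x) \<longlonglongrightarrow> (LINT x:(\<Inter>n. A n)|lebesgue. h x)" .
  have bound: "(s - r) * measure lebesgue S' \<le> (LINT x:A n|lebesgue. h x)" for n
    unfolding A_def h_def by (rule key_ineq[OF f rs S'_def Opo S'Op OpB])
  have Nsub: "(\<Inter>n. A n) \<subseteq> T n - S'" for n unfolding A_def Op_def by auto
  have Nlm: "(\<Inter>n. A n) \<in> lmeasurable"
  proof -
    have "(\<Inter>n. A n) \<in> sets lebesgue" using Am by (intro sets.countable_INT) auto
    then show ?thesis by (rule fmeasurableI2[OF T(3)[of 0] Nsub[of 0]])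
  qed
  have "measure lebesgue (\<Inter>n. A n) \<le> 0"
  proof (rule ccontr)
    assume "\<not> measure lebesgue (\<Inter>n. A n) \<le> 0"
    then obtain n where n: "1 / real (Suc n) < measure lebesgue (\<Inter>n. A n)"
      by (metis not_le nat_approx_posE)
    have "measure lebesgue (\<Inter>n. A n) \<le> measure lebesgue (T n - S')"
      by (rule measure_mono_fmeasurable[OF Nsub[of n]]) (use Nlm T(3)[of n] in auto)
    moreover have "measure lebesgue (T n - S') < 1 / real (Suc n)"
      using T(4)[of n] emeasure_eq_measure2[OF T(3)[of n]] by (simp add: ennreal_less_iff)
    ultimately show False using n by linarith
  qed
  then have "negligible (\<Inter>n. A n)"
    using negligible_iff_measure0[OF Nlm] measure_nonneg[of lebesgue "\<Inter>n. A n"] by linarith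
  then have Nnull: "(\<Inter>n. A n) \<in> null_sets lebesgue" by (simp add: negligible_iff_null_sets)
  have "(LINT x:(\<Inter>n. A n)|lebesgue. h x) = 0"
    unfolding set_lebesgue_integral_def
    by (rule integral_eq_zero_AE) (use AE_not_in[OF Nnull] in \<open>auto simp: indicator_def\<close>)
  then have "(s - r) * measure lebesgue S' \<le> 0"
    using LIMSEQ_le_const[OF lim] bound by auto
  then have "measure lebesgue S' \<le> 0" using rs by (simp add: mult_le_0_iff)
  then have "measure lebesgue S' = 0" using measure_nonneg[of lebesgue S'] by linarith
  then show ?thesis using negligible_iff_measure0[OF S'lm] unfolding S'_def by simp
qed

lemma Sset_negligible:
  fixes f :: "real \<Rightarrow> real"
  assumes f: "integrable lebesgue f" and rs: "r < s"
  shows "negligible (Sset f r s)"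
proof -
  have "Sset f r s \<subseteq> (\<Union>n::nat. Sset f r s \<inter> ball 0 (real n))"
  proof
    fix x :: real assume "x \<in> Sset f r s"
    obtain n :: nat where "norm x < real n" using reals_Archimedean2 by auto
    then show "x \<in> (\<Union>n::nat. Sset f r s \<inter> ball 0 (real n))"
      using \<open>x \<in> Sset f r s\<close> by (auto simp: dist_real_def)
  qed
  moreover have "negligible (\<Union>n::nat. Sset f r s \<inter> ball 0 (real n))"
    by (rule negligible_Union_nat) (rule Sset_ball_negligible[OF f rs])
  ultimately show ?thesis using negligible_subset by blast
qed


lemma upper_bound:
  fixes f :: "real \<Rightarrow> real"
  assumes f: "integrable lebesgue f" and xS: "x \<notin> Sset f r s" and fx: "f x < r"
  shows "\<exists>\<delta>>0. \<forall>h. h \<noteq> 0 \<and> \<bar>h\<bar> < \<delta> \<longrightarrow> (Gf f (x + h) - Gf f x) / h \<le> s"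
proof -
  have "\<not> (\<forall>n::nat. \<exists>a b. a < x \<and> x < b \<and> b - a < 1 / real (Suc n) \<and> s * (b - a) < Gf f b - Gf f a)"
    using xS fx unfolding Sset_def by auto
  then obtain n where n0: "\<not> (\<exists>a b. a < x \<and> x < b \<and> b - a < 1 / real (Suc n) \<and> s * (b - a) < Gf f b - Gf f a)"
    by blast
  have n: "Gf f b - Gf f a \<le> s * (b - a)" if "a < x" "x < b" "b - a < 1 / real (Suc n)" for a b
    using n0 that by (meson not_less)
  define d where "d = 1 / real (Suc n)"
  have d: "d > 0" unfolding d_def by simp
  have nd: "Gf f b - Gf f a \<le> s * (b - a)" if "a < x" "x < b" "b - a < d" for a b
    using n that unfolding d_def by blast
  obtain N where N: "1 / real (Suc N) < d / 2"
    using d by (metis half_gt_zero nat_approx_posE)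
  have ev: "\<forall>j\<ge>N. 1 / real (Suc j) < d / 2"
  proof (intro allI impI)
    fix j assume "N \<le> j"
    then have "1 / real (Suc j) \<le> 1 / real (Suc N)" by (simp add: frac_le)
    then show "1 / real (Suc j) < d / 2" using N by linarith
  qed
  show ?thesis
  proof (intro exI[of _ "d / 2"] conjI allI impI)
    show "0 < d / 2" using d by simp
    fix h assume h: "h \<noteq> 0 \<and> \<bar>h\<bar> < d / 2"
    then have hd: "h < d / 2" "- h < d / 2" by auto
    show "(Gf f (x + h) - Gf f x) / h \<le> s"
    proof (cases "h > 0")
      case True
      have "Gf f (x + h) - Gf f x \<le> s * h"
      proof (rule LIMSEQ_le)
        show "(\<lambda>j. Gf f (x + h) - Gf f (x - 1 / real (Suc j))) \<longlonglongrightarrow> Gf f (x + h) - Gf f x"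
          by (intro tendsto_intros Gf_left[OF f])
        have "(\<lambda>j. s * (h + 1 / real (Suc j))) \<longlonglongrightarrow> s * (h + 0)"
          by (intro tendsto_intros LIMSEQ_Suc[OF lim_inverse_n'])
        then show "(\<lambda>j. s * (h + 1 / real (Suc j))) \<longlonglongrightarrow> s * h" by simp
        show "\<exists>N. \<forall>j\<ge>N. Gf f (x + h) - Gf f (x - 1 / real (Suc j)) \<le> s * (h + 1 / real (Suc j))"
        proof (intro exI[of _ N] allI impI)
          fix j assume "N \<le> j"
          then have "1 / real (Suc j) < d / 2" using ev by auto
          moreover have "0 < 1 / real (Suc j)" by simp
          ultimately have "Gf f (x + h) - Gf f (x - 1 / real (Suc j)) \<le> s * (x + h - (x - 1 / real (Suc j)))"
            by (intro nd) (use hd True in linarith)+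
          then show "Gf f (x + h) - Gf f (x - 1 / real (Suc j)) \<le> s * (h + 1 / real (Suc j))" by simp
        qed
      qed
      then show ?thesis using True by (simp add: divide_le_eq mult.commute)
    next
      case False
      with h have hn: "h < 0" by auto
      have "Gf f x - Gf f (x + h) \<le> s * (- h)"
      proof (rule LIMSEQ_le)
        show "(\<lambda>j. Gf f (x + 1 / real (Suc j)) - Gf f (x + h)) \<longlonglongrightarrow> Gf f x - Gf f (x + h)"
          by (intro tendsto_intros Gf_right[OF f])
        have "(\<lambda>j. s * (1 / real (Suc j) - h)) \<longlonglongrightarrow> s * (0 - h)"
          by (intro tendsto_intros LIMSEQ_Suc[OF lim_inverse_n'])
        then show "(\<lambda>j. s * (1 / real (Suc j) - h)) \<longlonglongrightarrow> s * (- h)" by simp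
        show "\<exists>N. \<forall>j\<ge>N. Gf f (x + 1 / real (Suc j)) - Gf f (x + h) \<le> s * (1 / real (Suc j) - h)"
        proof (intro exI[of _ N] allI impI)
          fix j assume "N \<le> j"
          then have "1 / real (Suc j) < d / 2" using ev by auto
          moreover have "0 < 1 / real (Suc j)" by simp
          ultimately have "Gf f (x + 1 / real (Suc j)) - Gf f (x + h) \<le> s * (x + 1 / real (Suc j) - (x + h))"
            by (intro nd) (use hd hn in linarith)+
          then show "Gf f (x + 1 / real (Suc j)) - Gf f (x + h) \<le> s * (1 / real (Suc j) - h)" by simp
        qed
      qed
      then show ?thesis using hn by (simp add: neg_divide_le_eq algebra_simps)
    qed
  qed
qed

lemma Gf_uminus:
  fixes f :: "real \<Rightarrow> real"
  assumes f: "integrable lebesgue f"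
  shows "Gf (\<lambda>x. - f x) y = - Gf f y"
  unfolding Gf_def by (rule set_integral_uminus) (simp add: si_sub[OF f])

theorem lebesgue_diff:
  fixes f :: "real \<Rightarrow> real"
  assumes f: "integrable lebesgue f"
  shows "\<exists>N. negligible N \<and> (\<forall>x. x \<notin> N \<longrightarrow> (Gf f has_real_derivative f x) (at x))"
proof -
  define P :: "(real \<times> real) set" where "P = {(r, s). r \<in> \<rat> \<and> s \<in> \<rat> \<and> r < s}"
  have cP: "countable P"
  proof -
    have "P \<subseteq> \<rat> \<times> \<rat>" unfolding P_def by auto
    moreover have "countable (\<rat> \<times> (\<rat>::real set))" by (simp add: countable_rat)
    ultimately show ?thesis using countable_subset by blast
  qed
  have fm: "integrable lebesgue (\<lambda>x. - f x)" using f by simp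
  define N where "N = (\<Union>p\<in>P. Sset f (fst p) (snd p) \<union> Sset (\<lambda>x. - f x) (fst p) (snd p))"
  have negN: "negligible N"
    unfolding N_def
  proof (rule negligible_countable_Union)
    show "countable ((\<lambda>p. Sset f (fst p) (snd p) \<union> Sset (\<lambda>x. - f x) (fst p) (snd p)) ` P)"
      using cP by simp
    fix S assume "S \<in> (\<lambda>p. Sset f (fst p) (snd p) \<union> Sset (\<lambda>x. - f x) (fst p) (snd p)) ` P"
    then obtain r s where "r < s" "S = Sset f r s \<union> Sset (\<lambda>x. - f x) r s" unfolding P_def by auto
    then show "negligible S" using Sset_negligible[OF f] Sset_negligible[OF fm] by auto
  qed
  have "(Gf f has_real_derivative f x) (at x)" if xN: "x \<notin> N" for x
    unfolding DERIV_def LIM_eq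
  proof (intro allI impI)
    fix e :: real assume e: "e > 0"
    obtain r1 where r1: "r1 \<in> \<rat>" "f x < r1" "r1 < f x + e / 2"
      using Rats_dense_in_real[of "f x" "f x + e / 2"] e by auto
    obtain s1 where s1: "s1 \<in> \<rat>" "r1 < s1" "s1 < f x + e / 2"
      using Rats_dense_in_real[of r1 "f x + e / 2"] r1 by auto
    obtain r2 where r2: "r2 \<in> \<rat>" "- f x < r2" "r2 < - f x + e / 2"
      using Rats_dense_in_real[of "- f x" "- f x + e / 2"] e by auto
    obtain s2 where s2: "s2 \<in> \<rat>" "r2 < s2" "s2 < - f x + e / 2"
      using Rats_dense_in_real[of r2 "- f x + e / 2"] r2 by auto
    have "x \<notin> Sset f r1 s1" using xN r1 s1 unfolding N_def P_def by auto
    from upper_bound[OF f this r1(2)] obtain d1 where d1: "d1 > 0"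
      "\<And>h. h \<noteq> 0 \<and> \<bar>h\<bar> < d1 \<Longrightarrow> (Gf f (x + h) - Gf f x) / h \<le> s1" by auto
    have "x \<notin> Sset (\<lambda>x. - f x) r2 s2" using xN r2 s2 unfolding N_def P_def by auto
    from upper_bound[OF fm this] r2(2) obtain d2 where d2: "d2 > 0"
      "\<And>h. h \<noteq> 0 \<and> \<bar>h\<bar> < d2 \<Longrightarrow> (Gf (\<lambda>x. - f x) (x + h) - Gf (\<lambda>x. - f x) x) / h \<le> s2" by auto
    show "\<exists>d>0. \<forall>h. h \<noteq> 0 \<and> norm (h - 0) < d \<longrightarrow> norm ((Gf f (x + h) - Gf f x) / h - f x) < e"
    proof (intro exI[of _ "min d1 d2"] conjI allI impI)
      show "0 < min d1 d2" using d1 d2 by simp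
      fix h :: real assume h: "h \<noteq> 0 \<and> norm (h - 0) < min d1 d2"
      have u: "(Gf f (x + h) - Gf f x) / h \<le> s1" using d1(2)[of h] h by auto
      have "(Gf (\<lambda>x. - f x) (x + h) - Gf (\<lambda>x. - f x) x) / h \<le> s2" using d2(2)[of h] h by auto
      moreover have "(Gf (\<lambda>x. - f x) (x + h) - Gf (\<lambda>x. - f x) x) / h = - ((Gf f (x + h) - Gf f x) / h)"
        using h by (simp add: Gf_uminus[OF f] field_simps)
      ultimately have l: "- ((Gf f (x + h) - Gf f x) / h) \<le> s2" by simp
      show "norm ((Gf f (x + h) - Gf f x) / h - f x) < e"
        using u l s1 s2 by (simp add: abs_less_iff)
    qed
  qed
  then show ?thesis using negN by blast
qed


lemma Omega_sets[simp]: "Omega \<in> sets lebesgue" unfolding Omega_def by simp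
lemma Omega_lm[simp]: "Omega \<in> lmeasurable" unfolding Omega_def by simp

lemma L2_integrable:
  assumes "L2 g"
  shows "integrable (lebesgue_on Omega) g"
proof -
  have gm: "g \<in> borel_measurable (lebesgue_on Omega)" and g2: "integrable (lebesgue_on Omega) (\<lambda>m. (g m)\<^sup>2)"
    using assms unfolding L2_def by auto
  have "integrable lebesgue (\<lambda>x. indicat_real Omega x *\<^sub>R 1)"
    using Omega_lm by (simp add: fmeasurable_def)
  then have c1: "integrable (lebesgue_on Omega) (\<lambda>m. 1::real)"
    using Omega_lm by (subst integrable_restrict_space) (auto simp: fmeasurable_def)
  show ?thesis
  proof (rule Bochner_Integration.integrable_bound[of _ "\<lambda>m. 1 + (g m)\<^sup>2"])
    show "integrable (lebesgue_on Omega) (\<lambda>m. 1 + (g m)\<^sup>2)"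
      using c1 g2 by (rule Bochner_Integration.integrable_add)
    show "g \<in> borel_measurable (lebesgue_on Omega)" by fact
    show "AE x in lebesgue_on Omega. norm (g x) \<le> norm (1 + (g x)\<^sup>2)"
    proof (rule AE_I2)
      fix x
      have "0 \<le> (\<bar>g x\<bar> - 1/2)\<^sup>2" by simp
      also have "(\<bar>g x\<bar> - 1/2)\<^sup>2 = (g x)\<^sup>2 - \<bar>g x\<bar> + 1/4"
        by (simp add: power2_eq_square algebra_simps abs_mult_self_eq)
      finally have "\<bar>g x\<bar> \<le> 1 + (g x)\<^sup>2" by linarith
      then show "norm (g x) \<le> norm (1 + (g x)\<^sup>2)" by simp
    qed
  qed
qed

lemma downset:
  assumes DO: "D \<subseteq> Omega" and dc: "\<And>a b. a \<in> D \<Longrightarrow> b \<in> Omega \<Longrightarrow> b \<le> a \<Longrightarrow> b \<in> D"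
  shows "D \<in> sets lebesgue" "{0<..<measure lebesgue D} \<subseteq> D" "D \<subseteq> {0<..measure lebesgue D}"
proof -
  have "\<exists>c. 0 \<le> c \<and> {0<..<c} \<subseteq> D \<and> D \<subseteq> {0<..c}"
  proof (cases "D = {}")
    case True then show ?thesis by (intro exI[of _ 0]) auto
  next
    case False
    have bdd: "bdd_above D" using DO unfolding Omega_def by (auto intro!: bdd_aboveI[of _ 1])
    show ?thesis
    proof (intro exI[of _ "Sup D"] conjI subsetI)
      obtain a where aD: "a \<in> D" using False by auto
      have "a \<le> Sup D" by (rule cSup_upper[OF aD bdd])
      moreover have "0 < a" using DO aD unfolding Omega_def by auto
      ultimately show "0 \<le> Sup D" by linarith
    next
      fix y assume "y \<in> {0<..<Sup D}"
      then obtain a where a: "a \<in> D" "y < a" using less_cSup_iff[OF False bdd] by auto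
      have "y \<in> Omega" using \<open>y \<in> {0<..<Sup D}\<close> a DO unfolding Omega_def by auto
      then show "y \<in> D" using dc[OF a(1)] a by auto
    next
      fix y assume "y \<in> D"
      then show "y \<in> {0<..Sup D}" using cSup_upper[OF _ bdd] DO unfolding Omega_def by auto
    qed
  qed
  then obtain c where c: "{0<..<c} \<subseteq> D" "D \<subseteq> {0<..c}" and c0: "0 \<le> c" by blast
  have "D = {0<..<c} \<union> (D \<inter> {c})" using c by auto
  moreover have "D \<inter> {c} \<in> sets lebesgue"
    by (cases "c \<in> D") auto
  ultimately show Dm: "D \<in> sets lebesgue" by (metis sets.Un greaterThanLessThan_borel sets_completionI_sets sets_lborel)
  have "D \<in> lmeasurable" using fmeasurableI2[OF Omega_lm DO Dm] .
  have c0: "measure lebesgue D = c"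
  proof -
    have True: "0 \<le> c" by fact
    have "measure lebesgue {0<..<c} \<le> measure lebesgue D"
      using c(1) \<open>D \<in> lmeasurable\<close> by (intro measure_mono_fmeasurable) auto
    moreover have "measure lebesgue D \<le> measure lebesgue {0<..c}"
    proof (rule measure_mono_fmeasurable[OF c(2) Dm])
      show "{0<..c} \<in> lmeasurable"
        by (rule fmeasurableI2[OF lmeasurable_interval(1)[of 0 c]]) auto
    qed
    ultimately show ?thesis using True by simp
  qed
  show "{0<..<measure lebesgue D} \<subseteq> D" "D \<subseteq> {0<..measure lebesgue D}" using c c0 by auto
qed


definition Ls :: "(real \<Rightarrow> real) \<Rightarrow> real \<Rightarrow> real set" where
  "Ls X x = {m \<in> Omega. X m < x}"
definition Les :: "(real \<Rightarrow> real) \<Rightarrow> real \<Rightarrow> real set" where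
  "Les X x = {m \<in> Omega. X m \<le> x}"

context
  fixes X :: "real \<Rightarrow> real"
  assumes XK: "inK X"
begin

lemma Xmeas: "X \<in> borel_measurable (lebesgue_on Omega)"
  using XK unfolding inK_def L2_def by auto

lemma Xmono: "mono_on Omega X"
  using XK unfolding inK_def by auto

lemma Ls_props:
  shows "Ls X x \<in> sets lebesgue" "{0<..<measure lebesgue (Ls X x)} \<subseteq> Ls X x"
    "Ls X x \<subseteq> {0<..measure lebesgue (Ls X x)}"
proof -
  have "Ls X x \<subseteq> Omega" unfolding Ls_def by auto
  moreover have "b \<in> Ls X x" if "a \<in> Ls X x" "b \<in> Omega" "b \<le> a" for a b
    using that Xmono unfolding Ls_def by (auto dest: mono_onD)
  ultimately show "Ls X x \<in> sets lebesgue" "{0<..<measure lebesgue (Ls X x)} \<subseteq> Ls X x"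
    "Ls X x \<subseteq> {0<..measure lebesgue (Ls X x)}"
    using downset[of "Ls X x"] by blast+
qed

lemma Les_props:
  shows "Les X x \<in> sets lebesgue" "{0<..<measure lebesgue (Les X x)} \<subseteq> Les X x"
    "Les X x \<subseteq> {0<..measure lebesgue (Les X x)}"
proof -
  have "Les X x \<subseteq> Omega" unfolding Les_def by auto
  moreover have "b \<in> Les X x" if "a \<in> Les X x" "b \<in> Omega" "b \<le> a" for a b
    using that Xmono unfolding Les_def by (auto dest: mono_onD)
  ultimately show "Les X x \<in> sets lebesgue" "{0<..<measure lebesgue (Les X x)} \<subseteq> Les X x"
    "Les X x \<subseteq> {0<..measure lebesgue (Les X x)}"
    using downset[of "Les X x"] by blast+
qed

lemma Ls_lm: "Ls X x \<in> lmeasurable"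
  by (rule fmeasurableI2[OF Omega_lm _ Ls_props(1)]) (auto simp: Ls_def)

lemma Les_lm: "Les X x \<in> lmeasurable"
  by (rule fmeasurableI2[OF Omega_lm _ Les_props(1)]) (auto simp: Les_def)

lemma distM_eq: "distM X x = measure lebesgue (Les X x)"
  unfolding distM_def Les_def by simp

lemma mu_point: "measure (mu X) {x} = measure lebesgue (Les X x) - measure lebesgue (Ls X x)"
proof -
  have "measure (mu X) {x} = measure (lebesgue_on Omega) (X -` {x} \<inter> space (lebesgue_on Omega))"
    unfolding mu_def by (rule measure_distr) (use Xmeas in auto)
  also have "X -` {x} \<inter> space (lebesgue_on Omega) = Les X x - Ls X x"
    unfolding Les_def Ls_def by auto
  also have "measure (lebesgue_on Omega) (Les X x - Ls X x) = measure lebesgue (Les X x - Ls X x)"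
    by (rule measure_restrict_space) (auto simp: Les_def)
  also have "\<dots> = measure lebesgue (Les X x) - measure lebesgue (Ls X x)"
    by (rule measurable_measure_Diff[OF Les_lm Ls_props(1)]) (auto simp: Les_def Ls_def)
  finally show ?thesis .
qed

lemma Ls_le_Les: "measure lebesgue (Ls X x) \<le> measure lebesgue (Les X x)"
  by (rule measure_mono_fmeasurable[OF _ Ls_props(1) Les_lm]) (auto simp: Les_def Ls_def)

lemma left_lim: "Lim (at_left x) (distM X) = measure lebesgue (Ls X x)"
proof (rule tendsto_Lim[OF trivial_limit_at_left_real])
  let ?a = "measure lebesgue (Ls X x)"
  show "(distM X \<longlongrightarrow> ?a) (at_left x)"
  proof (rule order_tendstoI)
    fix a assume a: "a < ?a"
    show "\<forall>\<^sub>F y in at_left x. a < distM X y"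
    proof (cases "a < 0")
      case True
      have "a < distM X y" for y using True measure_nonneg[of lebesgue "Les X y"] unfolding distM_eq by linarith
      then show ?thesis by simp
    next
      case False
    define m0 where "m0 = max (?a / 2) ((a + ?a) / 2)"
    have a0: "0 < ?a" using a False by linarith
    have m0: "0 < m0" "m0 < ?a" "a < m0" unfolding m0_def using a a0 by (auto simp: less_max_iff_disj)
    then have "m0 \<in> Ls X x" using Ls_props(2)[of x] by auto
    then have Xm0: "X m0 < x" "m0 \<in> Omega" unfolding Ls_def by auto
    have "a < distM X y" if "y \<in> {X m0<..<x}" for y
    proof -
      have "{0<..m0} \<subseteq> Les X y"
      proof
        fix b assume b: "b \<in> {0<..m0}"
        then have "b \<in> Omega" using Xm0 unfolding Omega_def by auto
        then have "X b \<le> X m0" using Xmono b Xm0 by (auto dest: mono_onD)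
        then show "b \<in> Les X y" using that \<open>b \<in> Omega\<close> unfolding Les_def by auto
      qed
      then have "measure lebesgue {0<..m0} \<le> measure lebesgue (Les X y)"
        by (rule measure_mono_fmeasurable[OF _ _ Les_lm]) auto
      then show ?thesis using m0 by (simp add: distM_eq)
    qed
    then show "\<forall>\<^sub>F y in at_left x. a < distM X y"
      using eventually_at_left_real[OF Xm0(1)] by (auto elim: eventually_mono)
    qed
  next
    fix a assume a: "?a < a"
    have "distM X y < a" if "y \<in> {x - 1<..<x}" for y
    proof -
      have "Les X y \<subseteq> Ls X x" using that unfolding Les_def Ls_def by auto
      then have "measure lebesgue (Les X y) \<le> ?a"
        by (rule measure_mono_fmeasurable[OF _ Les_props(1) Ls_lm])
      then show ?thesis using a by (simp add: distM_eq)
    qed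
    then show "\<forall>\<^sub>F y in at_left x. distM X y < a"
      using eventually_at_left_real[of "x - 1" x] by (auto elim: eventually_mono)
  qed
qed

lemma nonatom:
  assumes m: "m \<in> Omega" and eq: "measure lebesgue (Les X (X m)) - measure lebesgue (Ls X (X m)) = 0"
  shows "distM X (X m) = m"
proof -
  have "m \<in> Les X (X m)" using m unfolding Les_def by auto
  then have "m \<le> measure lebesgue (Les X (X m))" using Les_props(3)[of "X m"] by auto
  moreover have "m \<notin> Ls X (X m)" unfolding Ls_def by auto
  then have "\<not> m < measure lebesgue (Ls X (X m))" using Ls_props(2)[of "X m"] m unfolding Omega_def by auto
  ultimately show ?thesis using eq by (simp add: distM_eq)
qed

end


lemma AE_neq: "AE y in lebesgue. y \<noteq> (a::real)"
proof -
  have "{a} \<in> null_sets lebesgue" using negligible_sing negligible_iff_null_sets by blast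
  then show ?thesis by (rule AE_I') auto
qed

context
  fixes X :: "real \<Rightarrow> real" and x \<alpha> \<beta> :: real
  assumes XK: "inK X"
    and \<alpha>def: "\<alpha> = measure lebesgue (Ls X x)" and \<beta>def: "\<beta> = measure lebesgue (Les X x)"
    and ab: "\<alpha> < \<beta>"
begin

lemma a0: "0 \<le> \<alpha>" unfolding \<alpha>def by simp

lemma b1: "\<beta> \<le> 1"
proof (rule ccontr)
  assume "\<not> \<beta> \<le> 1"
  then have "(1 + \<beta>) / 2 \<in> {0<..<\<beta>}" by auto
  then have "(1 + \<beta>) / 2 \<in> Les X x" using Les_props(2)[OF XK, of x] \<beta>def by auto
  then have "(1 + \<beta>) / 2 \<in> Omega" unfolding Les_def by auto
  then show False using \<open>\<not> \<beta> \<le> 1\<close> unfolding Omega_def by auto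
qed

lemma A1: "m \<in> Omega \<Longrightarrow> \<alpha> < m \<Longrightarrow> x \<le> X m"
  using Ls_props(3)[OF XK, of x] \<alpha>def unfolding Ls_def by force

lemma A2: "0 < m \<Longrightarrow> m < \<alpha> \<Longrightarrow> X m < x \<and> m \<in> Omega"
  using Ls_props(2)[OF XK, of x] \<alpha>def unfolding Ls_def by force

lemma A5: "m \<in> Omega \<Longrightarrow> m < \<beta> \<Longrightarrow> X m \<le> x"
  using Les_props(2)[OF XK, of x] \<beta>def unfolding Les_def Omega_def by force

lemma A3: "\<alpha> < m \<Longrightarrow> m < \<beta> \<Longrightarrow> X m = x \<and> m \<in> Omega"
proof -
  assume "\<alpha> < m" "m < \<beta>"
  then have "m \<in> Omega" using a0 b1 unfolding Omega_def by auto
  then show ?thesis using A1 A5 \<open>\<alpha> < m\<close> \<open>m < \<beta>\<close> by force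
qed

lemma A4: "m \<in> Omega \<Longrightarrow> \<beta> < m \<Longrightarrow> x < X m"
  using Les_props(3)[OF XK, of x] \<beta>def unfolding Les_def by force

lemma I_sub: "{\<alpha><..<\<beta>} \<subseteq> Omega_X X"
proof
  fix p assume p: "p \<in> {\<alpha><..<\<beta>}"
  define e where "e = min (p - \<alpha>) (\<beta> - p)"
  have e: "e > 0" using p unfolding e_def by auto
  have be: "ball p e \<subseteq> {\<alpha><..<\<beta>}" unfolding e_def ball_eq_greaterThanLessThan by auto
  have "{\<alpha><..<\<beta>} \<subseteq> Omega" using a0 b1 unfolding Omega_def by auto
  moreover have "X q = X p" if "q \<in> ball p e" for q using A3 be that p by auto
  ultimately show "p \<in> Omega_X X" unfolding Omega_X_def using e be p by blast
qed

lemma alpha_notin: "\<alpha> \<notin> Omega_X X"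
proof
  assume "\<alpha> \<in> Omega_X X"
  then obtain e where e: "e > 0" "\<forall>q\<in>ball \<alpha> e. X q = X \<alpha>" and aO: "\<alpha> \<in> Omega"
    unfolding Omega_X_def by blast
  have a0': "0 < \<alpha>" using aO unfolding Omega_def by auto
  define q1 where "q1 = \<alpha> - min e \<alpha> / 2"
  define q2 where "q2 = \<alpha> + min e (\<beta> - \<alpha>) / 2"
  have m1: "0 < min e \<alpha>" "min e \<alpha> \<le> e" "min e \<alpha> \<le> \<alpha>" using e a0' by auto
  have m2: "0 < min e (\<beta> - \<alpha>)" "min e (\<beta> - \<alpha>) \<le> e" "min e (\<beta> - \<alpha>) \<le> \<beta> - \<alpha>" using e ab by auto
  have "dist q1 \<alpha> = min e \<alpha> / 2" "dist q2 \<alpha> = min e (\<beta> - \<alpha>) / 2"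
    unfolding q1_def q2_def dist_real_def using m1 m2 by simp_all
  then have q1: "0 < q1" "q1 < \<alpha>" "dist q1 \<alpha> < e" and q2: "\<alpha> < q2" "q2 < \<beta>" "dist q2 \<alpha> < e"
    unfolding q1_def q2_def using m1 m2 by linarith+
  have "X q1 < x" using A2[OF q1(1,2)] by simp
  moreover have "X q2 = x" using A3[OF q2(1,2)] by simp
  moreover have "X q1 = X \<alpha>" "X q2 = X \<alpha>" using e(2) q1(3) q2(3) by (auto simp: dist_commute)
  ultimately show False by linarith
qed

lemma beta_notin: "\<beta> \<notin> Omega_X X"
proof
  assume "\<beta> \<in> Omega_X X"
  then obtain e where e: "e > 0" "\<forall>q\<in>ball \<beta> e. X q = X \<beta>" and bO: "\<beta> \<in> Omega"
    unfolding Omega_X_def by blast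
  have b1': "\<beta> < 1" using bO unfolding Omega_def by auto
  define q1 where "q1 = \<beta> - min e (\<beta> - \<alpha>) / 2"
  define q2 where "q2 = \<beta> + min e (1 - \<beta>) / 2"
  have m1: "0 < min e (\<beta> - \<alpha>)" "min e (\<beta> - \<alpha>) \<le> e" "min e (\<beta> - \<alpha>) \<le> \<beta> - \<alpha>" using e ab by auto
  have m2: "0 < min e (1 - \<beta>)" "min e (1 - \<beta>) \<le> e" "min e (1 - \<beta>) \<le> 1 - \<beta>" using e b1' by auto
  have "dist q1 \<beta> = min e (\<beta> - \<alpha>) / 2" "dist q2 \<beta> = min e (1 - \<beta>) / 2"
    unfolding q1_def q2_def dist_real_def using m1 m2 by simp_all
  then have q1: "\<alpha> < q1" "q1 < \<beta>" "dist q1 \<beta> < e" and q2: "\<beta> < q2" "q2 < 1" "dist q2 \<beta> < e"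
    unfolding q1_def q2_def using m1 m2 by linarith+
  have "q2 \<in> Omega" using q2 ab a0 unfolding Omega_def by auto
  have "X q1 = x" using A3[OF q1(1,2)] by simp
  moreover have "x < X q2" using A4[OF \<open>q2 \<in> Omega\<close> q2(1)] .
  moreover have "X q1 = X \<beta>" "X q2 = X \<beta>" using e(2) q1(3) q2(3) by (auto simp: dist_commute)
  ultimately show False by linarith
qed

lemma comp:
  assumes p: "p \<in> {\<alpha><..<\<beta>}"
  shows "connected_component_set (Omega_X X) p = {\<alpha><..<\<beta>}"
proof
  let ?C = "connected_component_set (Omega_X X) p"
  show "{\<alpha><..<\<beta>} \<subseteq> ?C"
    by (rule connected_component_maximal[OF p]) (use I_sub in auto)
  show "?C \<subseteq> {\<alpha><..<\<beta>}"
  proof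
    fix y assume y: "y \<in> ?C"
    have pC: "p \<in> ?C" using p I_sub by auto
    have cC: "connected ?C" by simp
    have CS: "?C \<subseteq> Omega_X X" by (rule connected_component_subset)
    show "y \<in> {\<alpha><..<\<beta>}"
    proof (rule ccontr)
      assume "y \<notin> {\<alpha><..<\<beta>}"
      then consider "y \<le> \<alpha>" | "\<beta> \<le> y" by force
      then show False
      proof cases
        case 1
        then have "\<alpha> \<in> {y..p}" using p by auto
        then have "\<alpha> \<in> ?C" using connected_contains_Icc[OF cC y pC] by auto
        then show False using CS alpha_notin by auto
      next
        case 2
        then have "\<beta> \<in> {p..y}" using p by auto
        then have "\<beta> \<in> ?C" using connected_contains_Icc[OF cC pC y] by auto
        then show False using CS beta_notin by auto
      qed
    qed
  qed
qed

lemma Proj_eq: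
  assumes p: "p \<in> {\<alpha><..<\<beta>}"
  shows "Proj_H X g p = (\<integral>w. g w \<partial>(lebesgue_on {\<alpha><..<\<beta>})) / (\<beta> - \<alpha>)"
proof -
  have "p \<in> Omega_X X" using p I_sub by blast
  then show ?thesis unfolding Proj_H_def Let_def comp[OF p] using ab by simp
qed

end


lemma id_meas_on[measurable]: "(\<lambda>x::real. x) \<in> borel_measurable (lebesgue_on S)"
  using id_borel_measurable_lebesgue_on[of S] by (simp add: id_def)

lemma const_int: "integrable (lebesgue_on Omega) (\<lambda>_. c::real)"
proof -
  have "integrable lebesgue (\<lambda>x. indicat_real Omega x *\<^sub>R c)"
    using Omega_lm by (simp add: fmeasurable_def)
  then show ?thesis using Omega_lm by (subst integrable_restrict_space) (auto simp: fmeasurable_def)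
qed

lemma integrable_bounded_mult:
  fixes g h :: "real \<Rightarrow> real"
  assumes g: "integrable M g" and h: "h \<in> borel_measurable M" and c: "0 \<le> c"
    and hb: "\<And>y. y \<in> space M \<Longrightarrow> \<bar>h y\<bar> \<le> c"
  shows "integrable M (\<lambda>y. h y * g y)"
proof (rule Bochner_Integration.integrable_bound[of _ "\<lambda>y. c * \<bar>g y\<bar>"])
  show "integrable M (\<lambda>y. c * \<bar>g y\<bar>)" using g by (intro integrable_mult_right integrable_abs)
  show "(\<lambda>y. h y * g y) \<in> borel_measurable M" using g h by measurable
  show "AE y in M. norm (h y * g y) \<le> norm (c * \<bar>g y\<bar>)"
  proof (rule AE_I2)
    fix y assume "y \<in> space M"
    then have "\<bar>h y\<bar> * \<bar>g y\<bar> \<le> c * \<bar>g y\<bar>" using hb by (intro mult_right_mono) auto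
    then show "norm (h y * g y) \<le> norm (c * \<bar>g y\<bar>)" using c by (simp add: abs_mult)
  qed
qed

definition WW :: "(real \<Rightarrow> real) \<Rightarrow> (real \<Rightarrow> real) \<Rightarrow> real \<Rightarrow> real" where
  "WW X u m = u m - Proj_H X u m"

context
  fixes X u :: "real \<Rightarrow> real" and x \<alpha> \<beta> k :: real
  assumes XK: "inK X" and Wnc: "WW X u \<in> normal_cone X"
    and \<alpha>def: "\<alpha> = measure lebesgue (Ls X x)" and \<beta>def: "\<beta> = measure lebesgue (Les X x)"
    and ab: "\<alpha> < \<beta>" and k: "\<alpha> < k" "k < \<beta>"
begin

lemma Wint: "integrable (lebesgue_on Omega) (WW X u)"
  using Wnc unfolding normal_cone_def by (auto intro: L2_integrable)

lemma Wmeas[measurable]: "WW X u \<in> borel_measurable (lebesgue_on Omega)"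
  using Wint by auto

lemma Xmeas'[measurable]: "X \<in> borel_measurable (lebesgue_on Omega)"
  using Xmeas[OF XK] .

lemma step1:
  assumes d: "\<delta> > 0"
  shows "0 \<le> (\<integral>m. indicator {\<alpha><..k} m * WW X u m \<partial>lebesgue_on Omega)
           + (\<integral>m. indicator {m. m \<le> \<alpha> \<and> x - \<delta> < X m} m * \<bar>WW X u m\<bar> \<partial>lebesgue_on Omega)"
proof -
  define Y where "Y m = (if m \<le> k then min (X m) (x - \<delta>) else X m)" for m
  define \<phi> where "\<phi> m = (if m \<le> k then max 0 (X m - (x - \<delta>)) else 0)" for m
  have YX: "Y m - X m = - \<phi> m" for m unfolding Y_def \<phi>_def by auto
  have \<phi>b: "0 \<le> \<phi> m \<and> \<phi> m \<le> \<delta>" if "m \<in> Omega" for m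
  proof (cases "m \<le> k")
    case True
    then have "X m \<le> x" using A5[OF XK \<alpha>def \<beta>def ab that] k by auto
    then show ?thesis unfolding \<phi>_def using True d by auto
  qed (use d in \<open>auto simp: \<phi>_def\<close>)
  have Ym[measurable]: "Y \<in> borel_measurable (lebesgue_on Omega)" unfolding Y_def by measurable
  have \<phi>m[measurable]: "\<phi> \<in> borel_measurable (lebesgue_on Omega)" unfolding \<phi>_def by measurable
  have X2: "integrable (lebesgue_on Omega) (\<lambda>m. (X m)\<^sup>2)" using XK unfolding inK_def L2_def by auto
  have YK: "inK Y"
    unfolding inK_def L2_def
  proof (intro conjI)
    show "Y \<in> borel_measurable (lebesgue_on Omega)" by (rule Ym)
    show "integrable (lebesgue_on Omega) (\<lambda>m. (Y m)\<^sup>2)"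
    proof (rule Bochner_Integration.integrable_bound[of _ "\<lambda>m. 2 * (X m)\<^sup>2 + 2 * \<delta>\<^sup>2"])
      show "integrable (lebesgue_on Omega) (\<lambda>m. 2 * (X m)\<^sup>2 + 2 * \<delta>\<^sup>2)"
        using X2 const_int by (intro Bochner_Integration.integrable_add integrable_mult_right) auto
      show "(\<lambda>m. (Y m)\<^sup>2) \<in> borel_measurable (lebesgue_on Omega)" by measurable
      show "AE m in lebesgue_on Omega. norm ((Y m)\<^sup>2) \<le> norm (2 * (X m)\<^sup>2 + 2 * \<delta>\<^sup>2)"
      proof (rule AE_I2)
        fix m assume "m \<in> space (lebesgue_on Omega)"
        then have mO: "m \<in> Omega" by simp
        have Y: "Y m = X m - \<phi> m" using YX[of m] by simp
        have "(Y m)\<^sup>2 \<le> 2 * (X m)\<^sup>2 + 2 * (\<phi> m)\<^sup>2"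
          unfolding Y using sum_squares_ge_zero[of "X m + \<phi> m" 0]
          by (simp add: power2_eq_square algebra_simps)
        also have "(\<phi> m)\<^sup>2 \<le> \<delta>\<^sup>2" using \<phi>b[OF mO] by (intro power_mono) auto
        finally show "norm ((Y m)\<^sup>2) \<le> norm (2 * (X m)\<^sup>2 + 2 * \<delta>\<^sup>2)" by simp
      qed
    qed
    show "mono_on Omega Y"
    proof (rule mono_onI)
      fix a b assume a: "a \<in> Omega" and b: "b \<in> Omega" and le: "a \<le> b"
      have Xab: "X a \<le> X b" using mono_onD[OF Xmono[OF XK] a b le] .
      show "Y a \<le> Y b"
      proof (cases "b \<le> k")
        case True then show ?thesis using le Xab unfolding Y_def by auto
      next
        case False
        then have "x \<le> X b" using A1[OF XK \<alpha>def \<beta>def ab b] k by auto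
        then show ?thesis using False d Xab unfolding Y_def by auto
      qed
    qed
  qed
  have nc: "(\<integral>m. WW X u m * (Y m - X m) \<partial>lebesgue_on Omega) \<le> 0"
    using Wnc YK unfolding normal_cone_def by auto
  have "(\<lambda>m. WW X u m * (Y m - X m)) = (\<lambda>m. - (\<phi> m * WW X u m))" by (rule ext) (simp add: YX)
  then have pos: "0 \<le> (\<integral>m. \<phi> m * WW X u m \<partial>lebesgue_on Omega)" using nc by simp
  define E where "E = {m. m \<le> \<alpha> \<and> x - \<delta> < X m}"
  have ind1[measurable]: "(\<lambda>m. indicat_real {\<alpha><..k} m) \<in> borel_measurable (lebesgue_on Omega)"
    unfolding indicator_def by measurable
  have ind2[measurable]: "(\<lambda>m. indicat_real E m) \<in> borel_measurable (lebesgue_on Omega)"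
    unfolding indicator_def E_def by measurable
  have int1: "integrable (lebesgue_on Omega) (\<lambda>m. indicat_real {\<alpha><..k} m * WW X u m)"
    by (rule integrable_bounded_mult[OF Wint ind1, of 1]) auto
  have int2: "integrable (lebesgue_on Omega) (\<lambda>m. indicat_real E m * \<bar>WW X u m\<bar>)"
    by (rule integrable_bounded_mult[OF integrable_abs[OF Wint] ind2, of 1]) auto
  have int3: "integrable (lebesgue_on Omega) (\<lambda>m. \<phi> m * WW X u m)"
    by (rule integrable_bounded_mult[OF Wint \<phi>m, of \<delta>]) (use d \<phi>b in auto)
  have pw: "\<phi> m * WW X u m \<le> \<delta> * (indicat_real {\<alpha><..k} m * WW X u m) + \<delta> * (indicat_real E m * \<bar>WW X u m\<bar>)"
    if mO: "m \<in> Omega" for m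
  proof -
    consider "k < m" | "\<alpha> < m \<and> m \<le> k" | "m \<le> \<alpha>" by linarith
    then show ?thesis
    proof cases
      case 1 then show ?thesis using k unfolding \<phi>_def E_def by auto
    next
      case 2
      then have "X m = x" using A3[OF XK \<alpha>def \<beta>def ab, of m] k by auto
      then show ?thesis using 2 d unfolding \<phi>_def E_def by auto
    next
      case 3
      have i1: "indicat_real {\<alpha><..k} m = 0" using 3 by auto
      show ?thesis
      proof (cases "x - \<delta> < X m")
        case True
        then have "m \<in> E" using 3 unfolding E_def by auto
        have "\<phi> m * WW X u m \<le> \<phi> m * \<bar>WW X u m\<bar>" using \<phi>b[OF mO] by (intro mult_left_mono) auto
        also have "\<dots> \<le> \<delta> * \<bar>WW X u m\<bar>" using \<phi>b[OF mO] by (intro mult_right_mono) auto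
        finally show ?thesis using i1 \<open>m \<in> E\<close> by simp
      next
        case False
        then have "\<phi> m = 0" using 3 k unfolding \<phi>_def by auto
        moreover have "0 \<le> \<delta> * (indicat_real E m * \<bar>WW X u m\<bar>)" using d by simp
        ultimately show ?thesis using i1 by simp
      qed
    qed
  qed
  have "(\<integral>m. \<phi> m * WW X u m \<partial>lebesgue_on Omega)
      \<le> (\<integral>m. \<delta> * (indicat_real {\<alpha><..k} m * WW X u m) + \<delta> * (indicat_real E m * \<bar>WW X u m\<bar>) \<partial>lebesgue_on Omega)"
    by (rule integral_mono[OF int3]) (use int1 int2 pw in auto)
  also have "\<dots> = \<delta> * ((\<integral>m. indicator {\<alpha><..k} m * WW X u m \<partial>lebesgue_on Omega)
           + (\<integral>m. indicator E m * \<bar>WW X u m\<bar> \<partial>lebesgue_on Omega))"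
    using int1 int2 by (simp add: distrib_left)
  finally have "0 \<le> \<delta> * ((\<integral>m. indicator {\<alpha><..k} m * WW X u m \<partial>lebesgue_on Omega)
           + (\<integral>m. indicator E m * \<bar>WW X u m\<bar> \<partial>lebesgue_on Omega))" using pos by linarith
  then show ?thesis using d unfolding E_def by (simp add: zero_le_mult_iff)
qed


lemma step2: "0 \<le> (\<integral>m. indicator {\<alpha><..k} m * WW X u m \<partial>lebesgue_on Omega)"
proof -
  define J where "J n = (\<integral>m. indicator {m. m \<le> \<alpha> \<and> x - 1 / real (Suc n) < X m} m * \<bar>WW X u m\<bar> \<partial>lebesgue_on Omega)" for n
  have AEn: "AE m in lebesgue_on Omega. m \<in> Omega \<and> m \<noteq> \<alpha>"
  proof (subst AE_restrict_space_iff)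
    show "Omega \<inter> space lebesgue \<in> sets lebesgue" by simp
    show "AE m in lebesgue. m \<in> Omega \<longrightarrow> m \<in> Omega \<and> m \<noteq> \<alpha>"
      using AE_neq[of \<alpha>] by (rule eventually_mono) auto
  qed
  have "J \<longlonglongrightarrow> (\<integral>m. 0 \<partial>lebesgue_on Omega)"
    unfolding J_def
  proof (rule integral_dominated_convergence[where w = "\<lambda>m. \<bar>WW X u m\<bar>"])
    show "(\<lambda>m. 0::real) \<in> borel_measurable (lebesgue_on Omega)" by simp
    show "(\<lambda>m. indicat_real {m. m \<le> \<alpha> \<and> x - 1 / real (Suc n) < X m} m * \<bar>WW X u m\<bar>) \<in> borel_measurable (lebesgue_on Omega)" for n
      unfolding indicator_def by measurable
    show "integrable (lebesgue_on Omega) (\<lambda>m. \<bar>WW X u m\<bar>)" using Wint by auto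
    show "AE m in lebesgue_on Omega. norm (indicat_real {m. m \<le> \<alpha> \<and> x - 1 / real (Suc n) < X m} m * \<bar>WW X u m\<bar>) \<le> \<bar>WW X u m\<bar>" for n
      by (rule AE_I2) (simp add: indicator_def)
    show "AE m in lebesgue_on Omega. (\<lambda>n. indicat_real {m. m \<le> \<alpha> \<and> x - 1 / real (Suc n) < X m} m * \<bar>WW X u m\<bar>) \<longlonglongrightarrow> 0"
      using AEn
    proof (rule eventually_mono)
      fix m assume m: "m \<in> Omega \<and> m \<noteq> \<alpha>"
      show "(\<lambda>n. indicat_real {m. m \<le> \<alpha> \<and> x - 1 / real (Suc n) < X m} m * \<bar>WW X u m\<bar>) \<longlonglongrightarrow> 0"
      proof (cases "\<alpha> < m")
        case True then show ?thesis by simp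
      next
        case False
        then have ma: "m < \<alpha>" using m by auto
        then have "X m < x" using A2[OF XK \<alpha>def \<beta>def ab, of m] m unfolding Omega_def by auto
        then obtain N where N: "1 / real (Suc N) < x - X m"
          by (metis diff_gt_0_iff_gt nat_approx_posE)
        have "eventually (\<lambda>n. indicat_real {m. m \<le> \<alpha> \<and> x - 1 / real (Suc n) < X m} m * \<bar>WW X u m\<bar> = 0) sequentially"
          unfolding eventually_sequentially
        proof (intro exI[of _ N] allI impI)
          fix n assume "N \<le> n"
          then have "1 / real (Suc n) \<le> 1 / real (Suc N)" by (simp add: frac_le)
          then have "\<not> x - 1 / real (Suc n) < X m" using N by linarith
          then show "indicat_real {m. m \<le> \<alpha> \<and> x - 1 / real (Suc n) < X m} m * \<bar>WW X u m\<bar> = 0" by simp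
        qed
        then show ?thesis by (rule tendsto_eventually)
      qed
    qed
  qed
  then have J0: "J \<longlonglongrightarrow> 0" by simp
  let ?I = "(\<integral>m. indicator {\<alpha><..k} m * WW X u m \<partial>lebesgue_on Omega)"
  have "\<forall>n. 0 \<le> ?I + J n" unfolding J_def using step1 by simp
  moreover have "(\<lambda>n. ?I + J n) \<longlonglongrightarrow> ?I + 0" by (intro tendsto_intros J0)
  ultimately show ?thesis using LIMSEQ_le_const by fastforce
qed


lemma step3:
  assumes uL2: "L2 u"
  shows "(k - \<alpha>) * ((Gf (\<lambda>w. indicator Omega w * u w) \<beta> - Gf (\<lambda>w. indicator Omega w * u w) \<alpha>) / (\<beta> - \<alpha>))
     \<le> Gf (\<lambda>w. indicator Omega w * u w) k - Gf (\<lambda>w. indicator Omega w * u w) \<alpha>"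
proof -
  define f where "f w = indicator Omega w * u w" for w
  have uint: "integrable (lebesgue_on Omega) u" using L2_integrable[OF uL2] .
  have fint: "integrable lebesgue f"
    using uint unfolding f_def by (subst (asm) integrable_restrict_space) auto
  have a0: "0 \<le> \<alpha>" using a0[OF XK \<alpha>def \<beta>def ab] .
  have b1: "\<beta> \<le> 1" using b1[OF XK \<alpha>def \<beta>def ab] .
  have IO: "{\<alpha><..<\<beta>} \<subseteq> Omega" using a0 b1 unfolding Omega_def by auto
  define avg where "avg = (\<integral>w. u w \<partial>(lebesgue_on {\<alpha><..<\<beta>})) / (\<beta> - \<alpha>)"
  have "(\<integral>m. indicator {\<alpha><..k} m * WW X u m \<partial>lebesgue_on Omega)
      = (\<integral>m. indicator {\<alpha><..k} m * u m - avg * indicator {\<alpha><..k} m \<partial>lebesgue_on Omega)"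
  proof (rule Bochner_Integration.integral_cong[OF refl])
    fix m assume "m \<in> space (lebesgue_on Omega)"
    show "indicat_real {\<alpha><..k} m * WW X u m = indicat_real {\<alpha><..k} m * u m - avg * indicat_real {\<alpha><..k} m"
    proof (cases "m \<in> {\<alpha><..k}")
      case True
      then have "m \<in> {\<alpha><..<\<beta>}" using k by auto
      then have "WW X u m = u m - avg"
        unfolding WW_def avg_def using Proj_eq[OF XK \<alpha>def \<beta>def ab] by simp
      then show ?thesis using True by simp
    qed simp
  qed
  also have "\<dots> = (\<integral>m. indicator {\<alpha><..k} m * u m \<partial>lebesgue_on Omega) - avg * (\<integral>m. indicator {\<alpha><..k} m \<partial>lebesgue_on Omega)"
  proof -
    have i1: "integrable (lebesgue_on Omega) (\<lambda>m. indicator {\<alpha><..k} m * u m)"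
      by (rule integrable_bounded_mult[OF uint, of _ 1]) (auto simp: indicator_def)
    have i2: "integrable (lebesgue_on Omega) (\<lambda>m. indicat_real {\<alpha><..k} m)"
      using integrable_bounded_mult[OF const_int[of 1], of "indicator {\<alpha><..k}" 1] by (auto simp: indicator_def)
    show ?thesis using i1 i2 by simp
  qed
  also have "(\<integral>m. indicator {\<alpha><..k} m \<partial>lebesgue_on Omega) = k - \<alpha>"
  proof -
    have "(\<integral>m. indicator {\<alpha><..k} m \<partial>lebesgue_on Omega) = measure (lebesgue_on Omega) ({\<alpha><..k} \<inter> space (lebesgue_on Omega))"
      by (rule Bochner_Integration.integral_indicator)
    also have "{\<alpha><..k} \<inter> space (lebesgue_on Omega) = {\<alpha><..k}" using IO k by auto
    also have "measure (lebesgue_on Omega) {\<alpha><..k} = measure lebesgue {\<alpha><..k}"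
      by (rule measure_restrict_space) (use IO k in auto)
    finally show ?thesis using k by simp
  qed
  also have "(\<integral>m. indicator {\<alpha><..k} m * u m \<partial>lebesgue_on Omega) = Gf f k - Gf f \<alpha>"
  proof -
    have "(\<integral>m. indicator {\<alpha><..k} m * u m \<partial>lebesgue_on Omega) = (\<integral>m. indicator Omega m *\<^sub>R (indicator {\<alpha><..k} m * u m) \<partial>lebesgue)"
      by (rule integral_restrict_space) simp
    also have "\<dots> = (LINT w:{\<alpha><..k}|lebesgue. f w)"
      unfolding set_lebesgue_integral_def f_def by (simp add: ac_simps)
    also have "\<dots> = Gf f k - Gf f \<alpha>" using Gf_diff[OF fint, of \<alpha> k] k by simp
    finally show ?thesis .
  qed
  also have "avg = (Gf f \<beta> - Gf f \<alpha>) / (\<beta> - \<alpha>)"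
  proof -
    have "(\<integral>w. u w \<partial>(lebesgue_on {\<alpha><..<\<beta>})) = (\<integral>w. indicator {\<alpha><..<\<beta>} w *\<^sub>R u w \<partial>lebesgue)"
      by (rule integral_restrict_space) simp
    also have "\<dots> = (LINT w:{\<alpha><..<\<beta>}|lebesgue. f w)"
      unfolding set_lebesgue_integral_def f_def using IO by (intro Bochner_Integration.integral_cong) (auto simp: indicator_def)
    also have "\<dots> = (LINT w:{\<alpha><..\<beta>}|lebesgue. f w)"
    proof -
      have "{\<alpha><..\<beta>} = {\<alpha><..<\<beta>} \<union> {\<beta>}" using ab by auto
      moreover have "(LINT w:{\<beta>}|lebesgue. f w) = 0"
        by (subst set_integral_at_point) (auto simp: si_sub[OF fint])
      moreover have "(LINT w:{\<alpha><..<\<beta>} \<union> {\<beta>}|lebesgue. f w) = (LINT w:{\<alpha><..<\<beta>}|lebesgue. f w) + (LINT w:{\<beta>}|lebesgue. f w)"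
        by (rule set_integral_Un) (auto simp: si_sub[OF fint])
      ultimately show ?thesis by simp
    qed
    also have "\<dots> = Gf f \<beta> - Gf f \<alpha>" using Gf_diff[OF fint, of \<alpha> \<beta>] ab by simp
    finally show ?thesis unfolding avg_def by simp
  qed
  finally have "0 \<le> Gf f k - Gf f \<alpha> - (Gf f \<beta> - Gf f \<alpha>) / (\<beta> - \<alpha>) * (k - \<alpha>)"
    using step2 by simp
  then show ?thesis unfolding f_def by (simp add: algebra_simps)
qed

end

lemma atom_alg:
  fixes a b k :: real and U :: "real \<Rightarrow> real"
  assumes ab: "a < b"
    and key: "a < k \<Longrightarrow> k < b \<Longrightarrow> (k - a) * ((U b - U a) / (b - a)) \<le> U k - U a"
  shows "(sgn (b - k) * (U b - U k) - sgn (a - k) * (U a - U k)) / (b - a)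
         \<le> (\<bar>b - k\<bar> - \<bar>a - k\<bar>) / (b - a) * ((U b - U a) / (b - a))"
proof -
  define s where "s = (U b - U a) / (b - a)"
  have ba: "b - a > 0" using ab by simp
  have Ub: "U b = U a + (b - a) * s" unfolding s_def using ba by simp
  consider "k \<le> a" | "b \<le> k" | "a < k \<and> k < b" by linarith
  then show ?thesis
  proof cases
    case 1
    have L: "sgn (b - k) * (U b - U k) - sgn (a - k) * (U a - U k) = U b - U a"
    proof (cases "k = a")
      case True then show ?thesis using ab by simp
    next
      case False then have "k < a" using 1 by simp
      then show ?thesis using ab by simp
    qed
    have R: "\<bar>b - k\<bar> - \<bar>a - k\<bar> = b - a" using 1 ab by simp
    show ?thesis unfolding L R using ba by (simp add: s_def)
  next
    case 2
    have L: "sgn (b - k) * (U b - U k) - sgn (a - k) * (U a - U k) = U a - U b"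
    proof (cases "k = b")
      case True then show ?thesis using ab by simp
    next
      case False then have "b < k" using 2 by simp
      then show ?thesis using ab by simp
    qed
    have R: "\<bar>b - k\<bar> - \<bar>a - k\<bar> = - (b - a)" using 2 ab by simp
    have e1: "(U a - U b) / (b - a) = - s" unfolding s_def by (metis minus_diff_eq minus_divide_left)
    have e3: "- (b - a) / (b - a) * s = - s" using ba by (simp add: divide_simps algebra_simps)
    show ?thesis unfolding L R e1 s_def[symmetric] by (simp only: e3)
  next
    case 3
    then have kk: "(k - a) * s \<le> U k - U a" using key unfolding s_def by auto
    have L: "sgn (b - k) * (U b - U k) - sgn (a - k) * (U a - U k) = 2 * U a + (b - a) * s - 2 * U k"
      using 3 Ub by simp
    have R: "\<bar>b - k\<bar> - \<bar>a - k\<bar> = a + b - 2 * k" using 3 by simp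
    have "2 * U a + (b - a) * s - 2 * U k \<le> (a + b - 2 * k) * s"
      using kk by (simp add: algebra_simps)
    then have "(2 * U a + (b - a) * s - 2 * U k) / (b - a) \<le> (a + b - 2 * k) * s / (b - a)"
      using ba by (intro divide_right_mono) auto
    then show ?thesis unfolding L R s_def by simp
  qed
qed

lemma sgn_deriv:
  assumes "m \<noteq> (k::real)"
  shows "((\<lambda>y. sgn (y - k)) has_real_derivative 0) (at m)"
proof (cases "m < k")
  case True
  show ?thesis
    by (rule has_field_derivative_transform_within_open[of "\<lambda>y. -1" 0 m "{..<k}"]) (use True in auto)
next
  case False
  then have "k < m" using assms by simp
  show ?thesis
    by (rule has_field_derivative_transform_within_open[of "\<lambda>y. 1" 0 m "{k<..}"]) (use \<open>k < m\<close> in auto)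
qed

theorem corollary5p3:
  fixes X :: "real \<Rightarrow> real" and U :: "real \<Rightarrow> real \<Rightarrow> real" and t :: real
  assumes "inK X"
    and "\<forall>m\<in>Omega. continuous (at_right m) X"
    and "L2 (U t)"
    and "(\<lambda>m. U t m - Proj_H X (U t) m) \<in> normal_cone X"
  shows "\<forall>k::real. AE m in lebesgue_on Omega.
           RN_deriv_M X (qflux U k t) (X m)
             \<le> RN_deriv_M X (eta k) (X m) * RN_deriv_M X (primU U t) (X m)"
proof (intro allI)
  fix k :: real
  define u where "u = U t"
  define f where "f w = indicator Omega w * u w" for w
  have XK: "inK X" by fact
  have uL2: "L2 u" unfolding u_def by fact
  have Wnc: "WW X u \<in> normal_cone X"
  proof -
    have "WW X u = (\<lambda>m. U t m - Proj_H X (U t) m)" unfolding WW_def u_def by (rule ext) simp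
    then show ?thesis using assms(4) by simp
  qed
  have uint: "integrable (lebesgue_on Omega) u" using L2_integrable[OF uL2] .
  have fint: "integrable lebesgue f"
    using uint unfolding f_def by (subst (asm) integrable_restrict_space) auto
  have primU_eq: "primU U t = Gf f"
  proof (rule ext)
    fix y
    show "primU U t y = Gf f y"
      unfolding primU_def Gf_def set_lebesgue_integral_def f_def u_def
      by (rule Bochner_Integration.integral_cong) (auto simp: indicator_def Omega_def)
  qed
  obtain N where N: "negligible N" "\<And>y. y \<notin> N \<Longrightarrow> (Gf f has_real_derivative f y) (at y)"
    using lebesgue_diff[OF fint] by blast
  have pt: "RN_deriv_M X (qflux U k t) (X m)
             \<le> RN_deriv_M X (eta k) (X m) * RN_deriv_M X (primU U t) (X m)"
    if mO: "m \<in> Omega" and mN: "m \<notin> N" and mk: "m \<noteq> k" for m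
  proof -
    define x where "x = X m"
    define \<alpha> where "\<alpha> = measure lebesgue (Ls X x)"
    define \<beta> where "\<beta> = measure lebesgue (Les X x)"
    have ab: "\<alpha> \<le> \<beta>" unfolding \<alpha>_def \<beta>_def by (rule Ls_le_Les[OF XK])
    have mu: "measure (mu X) {x} = \<beta> - \<alpha>" unfolding \<alpha>_def \<beta>_def by (rule mu_point[OF XK])
    have LL: "Lim (at_left x) (distM X) = \<alpha>" unfolding \<alpha>_def by (rule left_lim[OF XK])
    have DM: "distM X x = \<beta>" unfolding \<beta>_def by (rule distM_eq[OF XK])
    show ?thesis
    proof (cases "\<alpha> < \<beta>")
      case True
      have RN: "RN_deriv_M X G x = (G \<beta> - G \<alpha>) / (\<beta> - \<alpha>)" for G
        unfolding RN_deriv_M_def mu LL DM using True by simp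
      have key: "(k - \<alpha>) * ((Gf f \<beta> - Gf f \<alpha>) / (\<beta> - \<alpha>)) \<le> Gf f k - Gf f \<alpha>"
        if "\<alpha> < k" "k < \<beta>"
        using step3[OF XK Wnc \<alpha>_def \<beta>_def True that uL2] unfolding f_def .
      have "(sgn (\<beta> - k) * (Gf f \<beta> - Gf f k) - sgn (\<alpha> - k) * (Gf f \<alpha> - Gf f k)) / (\<beta> - \<alpha>)
         \<le> (\<bar>\<beta> - k\<bar> - \<bar>\<alpha> - k\<bar>) / (\<beta> - \<alpha>) * ((Gf f \<beta> - Gf f \<alpha>) / (\<beta> - \<alpha>))"
        by (rule atom_alg[OF True key])
      then show ?thesis unfolding x_def[symmetric] RN qflux_def eta_def primU_eq by simp
    next
      case False
      then have "\<beta> - \<alpha> = 0" using ab by simp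
      then have DMm: "distM X x = m" unfolding x_def \<alpha>_def \<beta>_def using nonatom[OF XK mO] by simp
      have RN: "RN_deriv_M X G x = deriv G m" for G
        unfolding RN_deriv_M_def mu DMm using \<open>\<beta> - \<alpha> = 0\<close> by simp
      have dU: "(Gf f has_real_derivative f m) (at m)" using N(2)[OF mN] .
      have dS: "((\<lambda>y. sgn (y - k)) has_real_derivative 0) (at m)" using sgn_deriv[OF mk] .
      have "((\<lambda>y. sgn (y - k) * (Gf f y - Gf f k)) has_real_derivative 0 * (Gf f m - Gf f k) + f m * sgn (m - k)) (at m)"
      proof -
        have dd: "((\<lambda>y. Gf f y - Gf f k) has_real_derivative f m) (at m)"
          using DERIV_diff[OF dU DERIV_const[of "Gf f k"]] by simp
        show ?thesis using DERIV_mult[OF dS dd] by simp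
      qed
      then have d1: "deriv (qflux U k t) m = sgn (m - k) * f m"
        unfolding qflux_def primU_eq by (intro DERIV_imp_deriv) (simp add: mult.commute)
      have "((\<lambda>y. sgn (y - k) * (y - k)) has_real_derivative 0 * (m - k) + 1 * sgn (m - k)) (at m)"
      proof -
        have dd: "((\<lambda>y. y - k) has_real_derivative 1) (at m)"
          using DERIV_diff[OF DERIV_ident DERIV_const[of k]] by simp
        show ?thesis using DERIV_mult[OF dS dd] by simp
      qed
      moreover have "eta k = (\<lambda>y. sgn (y - k) * (y - k))"
        unfolding eta_def by (rule ext) (simp add: abs_sgn mult.commute)
      ultimately have d2: "deriv (eta k) m = sgn (m - k)"
        by (intro DERIV_imp_deriv) simp
      have d3: "deriv (primU U t) m = f m" unfolding primU_eq by (rule DERIV_imp_deriv[OF dU])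
      show ?thesis unfolding x_def[symmetric] RN d1 d2 d3 by simp
    qed
  qed
  have Nk: "N \<union> {k} \<in> null_sets lebesgue"
    using N(1) negligible_sing[of k] by (simp add: negligible_iff_null_sets[symmetric])
  have "AE m in lebesgue. m \<in> Omega \<longrightarrow> RN_deriv_M X (qflux U k t) (X m)
             \<le> RN_deriv_M X (eta k) (X m) * RN_deriv_M X (primU U t) (X m)"
    by (rule AE_I'[OF Nk]) (use pt in auto)
  then show "AE m in lebesgue_on Omega. RN_deriv_M X (qflux U k t) (X m)
             \<le> RN_deriv_M X (eta k) (X m) * RN_deriv_M X (primU U t) (X m)"
    by (subst AE_restrict_space_iff) auto
qed

end
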